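(* Let $E_n$ be an $n$-dimensional Euclidean space with inner product $(\cdot,\cdot)$. Let $\Sigma_1,\Sigma_2\subseteq E_n$ be subspaces with bases $\mathbf a_1,\dots,\mathbf a_p$ and $\mathbf b_1,\dots,\mathbf b_q$ respectively, where $p\le q\le n$. If $p<q$, assume in addition that $\mathbf b_1,\dots,\mathbf b_q$ is an orthonormal basis. Let $M$ be the $p\times q$ matrix with entries $M_{ij}=(\mathbf a_i,\mathbf b_j)$, and let $\Gamma_1=\det[(\mathbf a_i,\mathbf a_k)]_{i,k=1}^p$ and $\Gamma_2=\det[(\mathbf b_j,\mathbf b_l)]_{j,l=1}^q$ be the Gram determinants. Then $$\det(MM^T)\le \Gamma_1\,\Gamma_2,$$ and equality holds if and only if $\Sigma_1\subseteq\Sigma_2$. *)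

theory Defs
  imports "HOL-Analysis.Analysis" "Jordan_Normal_Form.Determinant"
begin

definition gram_mat :: "nat \<Rightarrow> (nat \<Rightarrow> 'a::real_inner) \<Rightarrow> real Matrix.mat" where
  "gram_mat m v = Matrix.mat m m (\<lambda>(i,k). inner (v i) (v k))"

definition cross_mat :: "nat \<Rightarrow> nat \<Rightarrow> (nat \<Rightarrow> 'a::real_inner) \<Rightarrow> (nat \<Rightarrow> 'a) \<Rightarrow> real Matrix.mat" where
  "cross_mat p q a b = Matrix.mat p q (\<lambda>(i,j). inner (a i) (b j))"

definition lin_indep_family :: "nat \<Rightarrow> (nat \<Rightarrow> 'a::real_vector) \<Rightarrow> bool" where
  "lin_indep_family m v \<longleftrightarrow> inj_on v {..<m} \<and> independent (v ` {..<m})"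

end

theory Submission
  imports Defs
begin

lemma cross_left:
  assumes w: "\<And>i. i < n \<Longrightarrow> w i = (\<Sum>k<m. T $$ (i,k) *\<^sub>R v k)"
    and T: "T \<in> carrier_mat n m"
  shows "cross_mat n q w y = T * cross_mat m q v y"
proof (rule eq_matI)
  fix i j assume i: "i < dim_row (T * cross_mat m q v y)" and j: "j < dim_col (T * cross_mat m q v y)"
  hence i': "i < n" and j': "j < q" using T by (auto simp: cross_mat_def)
  have "(T * cross_mat m q v y) $$ (i,j) = (\<Sum>k<m. T $$ (i,k) * inner (v k) (y j))"
    using T i' j' by (simp add: cross_mat_def scalar_prod_def lessThan_atLeast0)
  also have "\<dots> = inner (w i) (y j)" using w[OF i'] by (simp add: inner_sum_left)
  finally show "cross_mat n q w y $$ (i,j) = (T * cross_mat m q v y) $$ (i,j)"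
    using i' j' by (simp add: cross_mat_def)
qed (use T in \<open>auto simp: cross_mat_def\<close>)

lemma cross_right:
  assumes w: "\<And>j. j < n \<Longrightarrow> w j = (\<Sum>k<m. R $$ (j,k) *\<^sub>R v k)"
    and R: "R \<in> carrier_mat n m"
  shows "cross_mat p n x w = cross_mat p m x v * transpose_mat R"
proof (rule eq_matI)
  fix i j assume i: "i < dim_row (cross_mat p m x v * transpose_mat R)" and j: "j < dim_col (cross_mat p m x v * transpose_mat R)"
  hence i': "i < p" and j': "j < n" using R by (auto simp: cross_mat_def)
  have "(cross_mat p m x v * transpose_mat R) $$ (i,j) = (\<Sum>k<m. inner (x i) (v k) * R $$ (j,k))"
    using R i' j' by (simp add: cross_mat_def scalar_prod_def lessThan_atLeast0)
  also have "\<dots> = inner (x i) (w j)" using w[OF j'] by (simp add: inner_sum_right mult.commute)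
  finally show "cross_mat p n x w $$ (i,j) = (cross_mat p m x v * transpose_mat R) $$ (i,j)"
    using i' j' by (simp add: cross_mat_def)
qed (use R in \<open>auto simp: cross_mat_def\<close>)

lemma span_repr:
  fixes w :: "nat \<Rightarrow> 'a::real_vector"
  assumes "x \<in> span (w ` {..<m})"
  shows "\<exists>c. x = (\<Sum>k<m. c k *\<^sub>R w k)"
proof -
  let ?S = "{x. \<exists>c. x = (\<Sum>k<m. c k *\<^sub>R w k)}"
  have sub: "subspace ?S"
    unfolding subspace_def
  proof (intro conjI ballI allI)
    show "0 \<in> ?S" by (auto intro: exI[of _ "\<lambda>_. 0"])
  next
    fix x y assume "x \<in> ?S" "y \<in> ?S"
    then obtain c d where "x = (\<Sum>k<m. c k *\<^sub>R w k)" "y = (\<Sum>k<m. d k *\<^sub>R w k)" by auto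
    thus "x + y \<in> ?S" by (auto intro!: exI[of _ "\<lambda>k. c k + d k"] simp: scaleR_add_left sum.distrib)
  next
    fix r x assume "x \<in> ?S"
    then obtain c where "x = (\<Sum>k<m. c k *\<^sub>R w k)" by auto
    thus "r *\<^sub>R x \<in> ?S" by (auto intro!: exI[of _ "\<lambda>k. r * c k"] simp: scaleR_sum_right)
  qed
  have "w ` {..<m} \<subseteq> ?S"
  proof
    fix x assume "x \<in> w ` {..<m}"
    then obtain j where j: "j < m" "x = w j" by auto
    have "(\<Sum>k<m. (if k = j then 1 else 0) *\<^sub>R w k) = w j"
      using j by (simp add: if_distrib[of "\<lambda>t. t *\<^sub>R _"] sum.delta cong: if_cong)
    thus "x \<in> ?S" using j by (auto intro!: exI[of _ "\<lambda>k. if k = j then 1 else 0"])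
  qed
  hence "span (w ` {..<m}) \<subseteq> ?S" using span_minimal sub by blast
  thus ?thesis using assms by auto
qed

lemma gram_cross: "gram_mat m v = cross_mat m m v v"
  by (simp add: gram_mat_def cross_mat_def)

lemma gram_carrier[simp]: "gram_mat m v \<in> carrier_mat m m"
  by (simp add: gram_mat_def)

lemma cross_carrier[simp]: "cross_mat p q a b \<in> carrier_mat p q"
  by (simp add: cross_mat_def)

lemma hadamard:
  fixes w :: "nat \<Rightarrow> 'a::euclidean_space"
  shows "0 \<le> Determinant.det (gram_mat m w) \<and> Determinant.det (gram_mat m w) \<le> (\<Prod>i<m. (norm (w i))\<^sup>2)"
proof (induction m)
  case 0
  show ?case by (simp add: gram_mat_def det_def)
next
  case (Suc m)
  obtain y z where y: "y \<in> span (w ` {..<m})" and z: "\<And>x. x \<in> span (w ` {..<m}) \<Longrightarrow> Linear_Algebra.orthogonal z x"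
    and wm: "w m = y + z"
    using orthogonal_subspace_decomp_exists by blast
  obtain c where c: "y = (\<Sum>k<m. c k *\<^sub>R w k)" using span_repr[OF y] by blast
  define w' where "w' = w(m := z)"
  define T where "T = Matrix.mat (Suc m) (Suc m) (\<lambda>(i,k). if i = m \<and> k < m then c k else if i = k then 1 else (0::real))"
  have T: "T \<in> carrier_mat (Suc m) (Suc m)" by (simp add: T_def)
  have rep: "w i = (\<Sum>k<Suc m. T $$ (i,k) *\<^sub>R w' k)" if i: "i < Suc m" for i
  proof (cases "i = m")
    case True
    have "(\<Sum>k<Suc m. T $$ (i,k) *\<^sub>R w' k) = (\<Sum>k<m. c k *\<^sub>R w k) + z"
      using True by (simp add: T_def w'_def)
    thus ?thesis using True wm c by simp
  next
    case False
    hence "i < m" using i by simp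
    have "(\<Sum>k<Suc m. T $$ (i,k) *\<^sub>R w' k) = (\<Sum>k<Suc m. (if k = i then w i else 0))"
      using \<open>i < m\<close> by (intro sum.cong) (auto simp: T_def w'_def)
    thus ?thesis using \<open>i < m\<close> by (simp add: sum.delta)
  qed
  have G: "gram_mat (Suc m) w = T * gram_mat (Suc m) w' * transpose_mat T"
    unfolding gram_cross
    using cross_left[OF rep T, of "Suc m" w] cross_right[OF rep T, of "Suc m" w']
      assoc_mult_mat[OF T cross_carrier transpose_carrier_mat[THEN iffD2, OF T]] by metis
  have "diag_mat T = map (\<lambda>i. 1) [0..<Suc m]"
    by (simp add: diag_mat_def T_def)
  moreover have "prod_list (map (\<lambda>i. 1::real) xs) = 1" for xs :: "nat list"
    by (induction xs) auto
  ultimately have dT: "Determinant.det T = 1"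
    using det_lower_triangular[OF _ T] by (simp add: T_def)
  have orth: "inner z (w k) = 0" if "k < m" for k
    using z[of "w k"] that span_base[of "w k" "w ` {..<m}"] by (auto simp: Linear_Algebra.orthogonal_def)
  define G' where "G' = gram_mat (Suc m) w'"
  have G'c: "G' \<in> carrier_mat (Suc m) (Suc m)" by (simp add: G'_def)
  have "Determinant.det G' = (\<Sum>j<Suc m. G' $$ (m,j) * cofactor G' m j)"
    using laplace_expansion_row[OF G'c, of m] by simp
  also have "\<dots> = G' $$ (m,m) * cofactor G' m m"
    using orth by (simp add: G'_def gram_mat_def w'_def)
  also have "mat_delete G' m m = gram_mat m w"
    by (rule eq_matI) (auto simp: mat_delete_def G'_def gram_mat_def w'_def)
  hence "cofactor G' m m = Determinant.det (gram_mat m w)"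
    by (simp add: cofactor_def)
  finally have dG': "Determinant.det G' = (norm z)\<^sup>2 * Determinant.det (gram_mat m w)"
    by (simp add: G'_def gram_mat_def w'_def power2_norm_eq_inner)
  have dG: "Determinant.det (gram_mat (Suc m) w) = (norm z)\<^sup>2 * Determinant.det (gram_mat m w)"
    unfolding G G'_def[symmetric]
    using det_mult[OF mult_carrier_mat[OF T G'c], of "transpose_mat T"] det_mult[OF T G'c]
      det_transpose[OF T] dT dG' T by simp
  have "Linear_Algebra.orthogonal y z" using z[OF y] by (simp add: orthogonal_commute)
  hence "(norm (w m))\<^sup>2 = (norm y)\<^sup>2 + (norm z)\<^sup>2" using wm norm_add_Pythagorean by simp
  hence nz: "(norm z)\<^sup>2 \<le> (norm (w m))\<^sup>2" by simp
  show ?case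
  proof
    show "0 \<le> Determinant.det (gram_mat (Suc m) w)" using dG Suc.IH by simp
    have "Determinant.det (gram_mat (Suc m) w) \<le> (norm (w m))\<^sup>2 * (\<Prod>i<m. (norm (w i))\<^sup>2)"
      unfolding dG using Suc.IH nz by (intro mult_mono) auto
    thus "Determinant.det (gram_mat (Suc m) w) \<le> (\<Prod>i<Suc m. (norm (w i))\<^sup>2)" by (simp add: mult.commute)
  qed
qed

definition ON :: "nat \<Rightarrow> (nat \<Rightarrow> 'a::real_inner) \<Rightarrow> bool" where
  "ON p u \<longleftrightarrow> (\<forall>i<p. \<forall>k<p. inner (u i) (u k) = (if i = k then 1 else 0))"

lemma ON_gram: "ON p u \<Longrightarrow> gram_mat p u = 1\<^sub>m p"
  by (rule eq_matI) (auto simp: ON_def gram_mat_def)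

lemma orthonormalize:
  fixes a :: "nat \<Rightarrow> 'a::euclidean_space"
  assumes "lin_indep_family p a"
  obtains u where "ON p u" "span (u ` {..<p}) = span (a ` {..<p})"
proof -
  let ?S = "span (a ` {..<p})"
  obtain B where B: "B \<subseteq> ?S" "pairwise Linear_Algebra.orthogonal B" "\<And>x. x \<in> B \<Longrightarrow> norm x = 1"
    "independent B" "card B = dim ?S" "span B = ?S"
    using orthonormal_basis_subspace[of ?S] subspace_span by blast
  have "dim ?S = p" using assms unfolding lin_indep_family_def
    by (simp add: dim_eq_card_independent card_image)
  hence cB: "card B = p" using B by simp
  have "finite B" using B(4) finiteI_independent by blast
  then obtain h where h: "bij_betw h {0..<p} B" using ex_bij_betw_nat_finite cB by metis
  have "ON p h" unfolding ON_def
  proof (intro allI impI)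
    fix i k assume i: "i < p" and k: "k < p"
    have hi: "h i \<in> B" "h k \<in> B" using h i k by (auto simp: bij_betw_def)
    show "inner (h i) (h k) = (if i = k then 1 else 0)"
    proof (cases "i = k")
      case True thus ?thesis using B(3)[OF hi(1)] by (simp add: dot_square_norm)
    next
      case False
      hence "h i \<noteq> h k" using h i k by (auto simp: bij_betw_def inj_on_def)
      thus ?thesis using B(2) hi False by (auto simp: pairwise_def Linear_Algebra.orthogonal_def)
    qed
  qed
  moreover have "h ` {..<p} = B" using h by (simp add: bij_betw_def lessThan_atLeast0)
  ultimately show ?thesis using that B(6) by auto
qed

lemma ON_coeffs:
  fixes u :: "nat \<Rightarrow> 'a::real_inner"
  assumes "ON p u" "x \<in> span (u ` {..<p})"
  shows "x = (\<Sum>k<p. inner x (u k) *\<^sub>R u k)"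
proof -
  obtain c where c: "x = (\<Sum>k<p. c k *\<^sub>R u k)" using span_repr[OF assms(2)] by blast
  have "inner x (u l) = c l" if "l < p" for l
  proof -
    have "inner x (u l) = (\<Sum>k<p. c k * inner (u k) (u l))" using c by (simp add: inner_sum_left)
    also have "\<dots> = (\<Sum>k<p. if k = l then c l else 0)"
      using assms(1) that by (intro sum.cong) (auto simp: ON_def)
    finally show ?thesis using that by simp
  qed
  thus ?thesis using c by (auto intro: sum.cong)
qed

lemma core:
  fixes u v :: "nat \<Rightarrow> 'a::euclidean_space"
  assumes u: "ON p u" and v: "ON q v"
  defines "C \<equiv> cross_mat p q u v"
  shows "Determinant.det (C * transpose_mat C) \<le> 1
     \<and> (Determinant.det (C * transpose_mat C) = 1 \<longleftrightarrow> span (u ` {..<p}) \<subseteq> span (v ` {..<q}))"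
proof -
  define P where "P i = (\<Sum>j<q. inner (u i) (v j) *\<^sub>R v j)" for i
  have Cc: "C \<in> carrier_mat p q" by (simp add: C_def)
  have rep: "P i = (\<Sum>k<q. C $$ (i,k) *\<^sub>R v k)" if "i < p" for i
    using that by (simp add: P_def C_def cross_mat_def)
  have "gram_mat p P = C * (gram_mat q v * transpose_mat C)"
    unfolding gram_cross
    using cross_left[OF rep Cc, of p P] cross_right[OF rep Cc, of q v] by simp
  hence GP: "gram_mat p P = C * transpose_mat C"
    using ON_gram[OF v] Cc by simp
  have Pspan: "P i \<in> span (v ` {..<q})" for i
    unfolding P_def by (intro span_sum span_scale span_base) auto
  have pyth: "(norm (u i))\<^sup>2 = (norm (P i))\<^sup>2 + (norm (u i - P i))\<^sup>2" for i
  proof -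
    have o1: "inner (u i - P i) (v j) = 0" if "j < q" for j
    proof -
      have "inner (P i) (v j) = (\<Sum>l<q. inner (u i) (v l) * inner (v l) (v j))"
        by (simp add: P_def inner_sum_left)
      also have "\<dots> = (\<Sum>l<q. if l = j then inner (u i) (v j) else 0)"
        using v that by (intro sum.cong) (auto simp: ON_def)
      finally show ?thesis using that by (simp add: inner_diff_left)
    qed
    have "inner (u i - P i) (P i) = (\<Sum>j<q. inner (u i) (v j) * inner (u i - P i) (v j))"
      by (subst (2) P_def) (simp add: inner_sum_right)
    also have "\<dots> = 0" using o1 by simp
    finally have "inner (u i - P i) (P i) = 0" .
    hence "Linear_Algebra.orthogonal (P i) (u i - P i)"
      by (simp add: Linear_Algebra.orthogonal_def inner_commute)
    from norm_add_Pythagorean[OF this] show ?thesis by simp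
  qed
  have nu: "(norm (u i))\<^sup>2 = 1" if "i < p" for i
    using u that by (simp add: ON_def power2_norm_eq_inner)
  have le1: "(norm (P i))\<^sup>2 \<le> 1" if "i < p" for i
    using pyth[of i] nu[OF that] by (smt (verit) zero_le_power2)
  have had: "Determinant.det (C * transpose_mat C) \<le> (\<Prod>i<p. (norm (P i))\<^sup>2)"
    using hadamard[of p P] GP by simp
  have prod1: "(\<Prod>i<p. (norm (P i))\<^sup>2) \<le> 1"
    using le1 by (intro prod_le_1) auto
  show ?thesis
  proof (intro conjI iffI)
    show "Determinant.det (C * transpose_mat C) \<le> 1" using had prod1 by simp
  next
    assume eq: "Determinant.det (C * transpose_mat C) = 1"
    have all1: "(norm (P i))\<^sup>2 = 1" if i: "i < p" for i
    proof (rule ccontr)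
      assume "(norm (P i))\<^sup>2 \<noteq> 1"
      hence lt: "(norm (P i))\<^sup>2 < 1" using le1[OF i] by simp
      have "(\<Prod>i<p. (norm (P i))\<^sup>2) = (norm (P i))\<^sup>2 * (\<Prod>k\<in>{..<p}-{i}. (norm (P k))\<^sup>2)"
        using i by (simp add: prod.remove)
      also have "\<dots> \<le> (norm (P i))\<^sup>2 * 1"
        using le1 by (intro mult_left_mono prod_le_1) auto
      finally show False using had eq lt by simp
    qed
    have "u i \<in> span (v ` {..<q})" if "i < p" for i
    proof -
      have "(norm (u i - P i))\<^sup>2 = 0" using pyth[of i] all1[OF that] nu[OF that] by simp
      hence "u i = P i" by simp
      thus ?thesis using Pspan by simp
    qed
    hence "u ` {..<p} \<subseteq> span (v ` {..<q})" by auto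
    thus "span (u ` {..<p}) \<subseteq> span (v ` {..<q})" using span_minimal subspace_span by blast
  next
    assume sub: "span (u ` {..<p}) \<subseteq> span (v ` {..<q})"
    have "P i = u i" if "i < p" for i
      using ON_coeffs[OF v, of "u i"] sub span_base[of "u i" "u ` {..<p}"] that
      by (auto simp: P_def)
    hence "gram_mat p P = gram_mat p u" by (auto simp: gram_mat_def intro!: eq_matI)
    thus "Determinant.det (C * transpose_mat C) = 1" using GP ON_gram[OF u] by simp
  qed
qed

lemma det_sandwich:
  assumes T: "T \<in> carrier_mat p p" and X: "X \<in> carrier_mat p p"
  shows "Determinant.det (T * X * transpose_mat T) = (Determinant.det T)\<^sup>2 * Determinant.det X"
proof -
  have TX: "T * X \<in> carrier_mat p p" using T X by (rule mult_carrier_mat)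
  have Tt: "transpose_mat T \<in> carrier_mat p p" using T by (rule transpose_carrier_mat[THEN iffD2])
  have "Determinant.det (T * X * transpose_mat T) = Determinant.det (T * X) * Determinant.det (transpose_mat T)"
    by (rule det_mult[OF TX Tt])
  also have "Determinant.det (T * X) = Determinant.det T * Determinant.det X" by (rule det_mult[OF T X])
  also have "Determinant.det (transpose_mat T) = Determinant.det T" by (rule det_transpose[OF T])
  finally show ?thesis by (simp add: power2_eq_square)
qed

lemma reduce:
  fixes a u :: "nat \<Rightarrow> 'a::euclidean_space"
  assumes u: "ON p u" and sp: "span (u ` {..<p}) = span (a ` {..<p})"
  defines "T \<equiv> Matrix.mat p p (\<lambda>(i,k). inner (a i) (u k))"
  shows "\<And>i. i < p \<Longrightarrow> a i = (\<Sum>k<p. T $$ (i,k) *\<^sub>R u k)"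
    and "Determinant.det (gram_mat p a) = (Determinant.det T)\<^sup>2"
    and "Determinant.det (gram_mat p a) \<noteq> 0"
proof -
  have Tc: "T \<in> carrier_mat p p" by (simp add: T_def)
  show rep: "a i = (\<Sum>k<p. T $$ (i,k) *\<^sub>R u k)" if "i < p" for i
    using ON_coeffs[OF u, of "a i"] sp span_base[of "a i" "a ` {..<p}"] that
    by (simp add: T_def)
  have "gram_mat p a = T * (gram_mat p u * transpose_mat T)"
    unfolding gram_cross
    using cross_left[OF rep Tc, of p a] cross_right[OF rep Tc, of p u] by simp
  also have "T * (gram_mat p u * transpose_mat T) = T * gram_mat p u * transpose_mat T"
    by (rule assoc_mult_mat[OF Tc gram_carrier transpose_carrier_mat[THEN iffD2, OF Tc], symmetric])
  finally have "gram_mat p a = T * gram_mat p u * transpose_mat T" .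
  thus "Determinant.det (gram_mat p a) = (Determinant.det T)\<^sup>2"
    using det_sandwich[OF Tc, of "gram_mat p u"] ON_gram[OF u] by simp
  have ex: "\<exists>c. u k = (\<Sum>j<p. c j *\<^sub>R a j)" if "k < p" for k
  proof -
    have "u k \<in> span (u ` {..<p})" using that by (intro span_base) auto
    thus ?thesis unfolding sp by (rule span_repr)
  qed
  hence "\<forall>k. \<exists>c. k < p \<longrightarrow> u k = (\<Sum>j<p. c j *\<^sub>R a j)" by blast
  from choice[OF this] obtain cc where cc: "\<And>k. k < p \<Longrightarrow> u k = (\<Sum>j<p. cc k j *\<^sub>R a j)" by blast
  define S where "S = Matrix.mat p p (\<lambda>(k,j). cc k j)"
  have Sc: "S \<in> carrier_mat p p" by (simp add: S_def)
  have repS: "u k = (\<Sum>j<p. S $$ (k,j) *\<^sub>R a j)" if "k < p" for k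
    using cc[OF that] that by (simp add: S_def)
  have "gram_mat p u = S * (gram_mat p a * transpose_mat S)"
    unfolding gram_cross
    using cross_left[OF repS Sc, of p u] cross_right[OF repS Sc, of p a] by simp
  also have "S * (gram_mat p a * transpose_mat S) = S * gram_mat p a * transpose_mat S"
    by (rule assoc_mult_mat[OF Sc gram_carrier transpose_carrier_mat[THEN iffD2, OF Sc], symmetric])
  finally have "gram_mat p u = S * gram_mat p a * transpose_mat S" .
  hence "Determinant.det (gram_mat p u) = (Determinant.det S)\<^sup>2 * Determinant.det (gram_mat p a)"
    using det_sandwich[OF Sc gram_carrier] by simp
  hence "1 = (Determinant.det S)\<^sup>2 * Determinant.det (gram_mat p a)"
    using ON_gram[OF u] by simp
  thus "Determinant.det (gram_mat p a) \<noteq> 0" by auto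
qed

theorem theorem1p1:
  fixes a b :: "nat \<Rightarrow> 'a::euclidean_space" and p q :: nat
  assumes "p \<le> q" and "q \<le> DIM('a)"
    and "lin_indep_family p a" and "lin_indep_family q b"
    and "p < q \<Longrightarrow> (\<forall>j<q. \<forall>l<q. inner (b j) (b l) = (if j = l then 1 else 0))"
  shows "Determinant.det (cross_mat p q a b * transpose_mat (cross_mat p q a b))
           \<le> Determinant.det (gram_mat p a) * Determinant.det (gram_mat q b)
      \<and> (Determinant.det (cross_mat p q a b * transpose_mat (cross_mat p q a b))
           = Determinant.det (gram_mat p a) * Determinant.det (gram_mat q b)
         \<longleftrightarrow> span (a ` {..<p}) \<subseteq> span (b ` {..<q}))"
proof -
  let ?M = "cross_mat p q a b"
  let ?G1 = "Determinant.det (gram_mat p a)"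
  let ?G2 = "Determinant.det (gram_mat q b)"
  obtain u where u: "ON p u" and spu: "span (u ` {..<p}) = span (a ` {..<p})"
    using orthonormalize[OF assms(3)] by blast
  define T where "T \<equiv> Matrix.mat p p (\<lambda>(i,k). inner (a i) (u k))"
  have Tc: "T \<in> carrier_mat p p" by (simp add: T_def)
  note rT = reduce[OF u spu, folded T_def]
  have G1: "?G1 > 0" using rT(2,3) by simp
  have M1: "?M = T * cross_mat p q u b" using cross_left[OF rT(1) Tc, of q b] by simp
  have "\<exists>v. ON q v \<and> span (v ` {..<q}) = span (b ` {..<q}) \<and> ?G2 > 0 \<and>
     Determinant.det (?M * transpose_mat ?M) = ?G1 * ?G2 *
       Determinant.det (cross_mat p q u v * transpose_mat (cross_mat p q u v))"
  proof (cases "p < q")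
    case True
    have v: "ON q b" using assms(5)[OF True] by (simp add: ON_def)
    have G2: "?G2 = 1" using ON_gram[OF v] by simp
    let ?C = "cross_mat p q u b"
    have Cc: "?C \<in> carrier_mat p q" by simp
    have Ct: "transpose_mat ?C \<in> carrier_mat q p" by simp
    have Tt: "transpose_mat T \<in> carrier_mat p p" using Tc by simp
    have "?M * transpose_mat ?M = T * ?C * (transpose_mat ?C * transpose_mat T)"
      unfolding M1 transpose_mult[OF Tc Cc] ..
    also have "\<dots> = T * (?C * (transpose_mat ?C * transpose_mat T))"
      by (rule assoc_mult_mat[OF Tc Cc mult_carrier_mat[OF Ct Tt]])
    also have "?C * (transpose_mat ?C * transpose_mat T) = ?C * transpose_mat ?C * transpose_mat T"
      by (rule assoc_mult_mat[OF Cc Ct Tt, symmetric])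
    also have "T * (?C * transpose_mat ?C * transpose_mat T) = T * (?C * transpose_mat ?C) * transpose_mat T"
      by (rule assoc_mult_mat[OF Tc mult_carrier_mat[OF Cc Ct] Tt, symmetric])
    finally have "?M * transpose_mat ?M = T * (?C * transpose_mat ?C) * transpose_mat T" .
    hence "Determinant.det (?M * transpose_mat ?M) = ?G1 * Determinant.det (?C * transpose_mat ?C)"
      using det_sandwich[OF Tc mult_carrier_mat[OF Cc Ct]] rT(2) by simp
    thus ?thesis using v G2 by (intro exI[of _ b]) simp
  next
    case False
    hence pq: "q = p" using assms(1) by simp
    obtain v where v: "ON q v" and spv: "span (v ` {..<q}) = span (b ` {..<q})"
      using orthonormalize[OF assms(4)] by blast
    define R where "R \<equiv> Matrix.mat q q (\<lambda>(i,k). inner (b i) (v k))"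
    have Rc: "R \<in> carrier_mat p p" by (simp add: R_def pq)
    note rR = reduce[OF v spv, folded R_def]
    let ?C = "cross_mat p q u v"
    have Cc: "?C \<in> carrier_mat p p" by (simp add: pq)
    have Rq: "R \<in> carrier_mat q q" by (simp add: R_def)
    have "cross_mat p q u b = cross_mat p q u v * transpose_mat R"
      by (rule cross_right[OF rR(1) Rq])
    hence M2: "?M = T * (?C * transpose_mat R)" using M1 by simp
    have Rt: "transpose_mat R \<in> carrier_mat p p" using Rc by simp
    have "Determinant.det ?M = Determinant.det T * Determinant.det (?C * transpose_mat R)"
      unfolding M2 by (rule det_mult[OF Tc mult_carrier_mat[OF Cc Rt]])
    also have "Determinant.det (?C * transpose_mat R) = Determinant.det ?C * Determinant.det (transpose_mat R)"
      by (rule det_mult[OF Cc Rt])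
    also have "Determinant.det (transpose_mat R) = Determinant.det R" by (rule det_transpose[OF Rc])
    finally have dM: "Determinant.det ?M = Determinant.det T * (Determinant.det ?C * Determinant.det R)" .
    have Mc: "?M \<in> carrier_mat p p" by (simp add: pq)
    have Mt: "transpose_mat ?M \<in> carrier_mat p p" using Mc by simp
    have "Determinant.det (?M * transpose_mat ?M) = Determinant.det ?M * Determinant.det (transpose_mat ?M)"
      by (rule det_mult[OF Mc Mt])
    also have "\<dots> = (Determinant.det ?M)\<^sup>2"
      using det_transpose[OF Mc] by (simp add: power2_eq_square)
    also have "\<dots> = ?G1 * ?G2 * (Determinant.det ?C)\<^sup>2"
      unfolding dM rT(2) rR(2) by (simp add: power_mult_distrib)
    also have "(Determinant.det ?C)\<^sup>2 = Determinant.det (?C * transpose_mat ?C)"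
      using det_mult[OF Cc transpose_carrier_mat[THEN iffD2, OF Cc]] det_transpose[OF Cc]
      by (simp add: power2_eq_square)
    finally show ?thesis using v spv rR(2,3) by (intro exI[of _ v]) auto
  qed
  then obtain v where v: "ON q v" and spv: "span (v ` {..<q}) = span (b ` {..<q})" and G2: "?G2 > 0"
    and dM: "Determinant.det (?M * transpose_mat ?M) = ?G1 * ?G2 *
       Determinant.det (cross_mat p q u v * transpose_mat (cross_mat p q u v))" by blast
  note c = core[OF u v]
  have pos: "?G1 * ?G2 > 0" using G1 G2 by simp
  define X where "X = Determinant.det (cross_mat p q u v * transpose_mat (cross_mat p q u v))"
  define g where "g = ?G1 * ?G2"
  have X1: "X \<le> 1" and Xeq: "X = 1 \<longleftrightarrow> span (a ` {..<p}) \<subseteq> span (b ` {..<q})"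
    using c spu spv unfolding X_def by auto
  have gp: "g > 0" using pos g_def by simp
  have "g * X \<le> g" using X1 gp by (simp add: mult_le_cancel_left1)
  moreover have "g * X = g \<longleftrightarrow> X = 1" using gp by simp
  ultimately show ?thesis unfolding dM using Xeq by (simp add: g_def X_def)
qed

end
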